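(* Consider a trajectory of the no-slip billiard in a solid cylinder $\mathcal{B}\subset\mathbb{R}^n$ with axis vector $e$, under no forces, that is transversely periodic of period $2$ (its projection to the transverse billiard in $e^\perp$ is periodic of period $2$, so the collision normals alternate between two values and all intercollision times are equal; this common time is set to $1$, and $h_0=0$). Define $Q=\mathcal{A}_1\mathcal{A}_2$, $\mathcal{A}=\mathcal{A}_1$, and the row vector $\xi=(1+c,\,-s\nu_1^\dagger)$. Then $Q\in SO(n)$. Let $P$ be the orthogonal projection onto the eigenspace of $Q$ for the eigenvalue $1$. Then $$h_\ell=\hat h_\ell+\Big\lfloor\frac{\ell}{2}\Big\rfloor\xi P\Lambda_0,$$ where $(\hat h_\ell)$ is a bounded sequence. Consequently $\lim_{\ell\to\infty}h_\ell/\ell=\frac12\xi P\Lambda_0$. In particular, if $1$ is not in the spectrum of $Q$, the orbit is bounded; if $\xi$ is not orthogonal to the eigenspace of $Q$ for the eigenvalue $1$, then for generic initial conditions the orbit is not bounded.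
   Context: The particle is a ball of radius $r>0$ with rotationally symmetric mass distribution of total mass $m$ and second-moment matrix per unit mass $\lambda I$, $\lambda=(r\gamma)^2/2$, $\gamma>0$; $c=\frac{1-\gamma^2}{1+\gamma^2}$, $s=\frac{2\gamma}{1+\gamma^2}$; $(a\wedge b)x=(a\cdot x)b-(b\cdot x)a$. The solid cylinder is $\mathcal{B}=\overline{\mathcal{B}}\times\mathbb{R}e$ with $\overline{\mathcal{B}}\subset W:=e^\perp$ (the set of admissible centers); $\nu_a\in W$ is the inward unit normal at a regular boundary point $a$. A state is $(a,u,U)$, $u$ the center-of-mass velocity, $U\in\mathfrak{so}(n)$ the angular velocity matrix. Between collisions $U$ is constant and the center of mass moves freely; at a collision at $a$ the pre-collision $(u,U)$ is replaced by $C_a(u,U)=\big(cu-\tfrac{s}{\gamma}(u\cdot\nu_a)\nu_a+s\gamma rU\nu_a,\ \tfrac{s}{\gamma r}\nu_a\wedge u+U-\tfrac{s}{\gamma}\nu_a\wedge U\nu_a\big)$. For the $j$th collision at $a_j$ ($j=0,1,\dots$), $\nu_j=\nu_{a_j}$, $(u_j,U_j)$ are the post-collision velocities, $h_j=a_j\cdot e$, $\sigma_j=u_j\cdot e$, $w_j=\gamma rU_je$, $\Lambda_j=(\sigma_j,w_j)\in\mathbb{R}\oplus W\cong\mathbb{R}^n$. For a boundary point $a$ let $\Pi_a$ be the orthogonal projection onto $\{w\in W:w\cdot\nu_a=0\}$ and $\mathcal{A}(a)$ the linear map of $\mathbb{R}\oplus W$ with block matrix $\begin{pmatrix}c&-s\nu_a^\dagger\\-s\nu_a&-c\nu_a\nu_a^\dagger+\Pi_a\end{pmatrix}$;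 $\mathcal{A}_i=\mathcal{A}(a_i)$. *)

theory Defs
  imports "HOL-Analysis.Analysis"
begin

text \<open>Vectors live in \<open>real^'n\<close> (= R^n). The axis is a unit vector \<open>e\<close>;
  \<open>W = e\<^sup>\<perp>\<close>. Angular velocity matrices are \<open>real^'n^'n\<close>.\<close>

definition nsb_c :: "real \<Rightarrow> real" where
  "nsb_c \<gamma> = (1 - \<gamma>^2) / (1 + \<gamma>^2)"

definition nsb_s :: "real \<Rightarrow> real" where
  "nsb_s \<gamma> = 2 * \<gamma> / (1 + \<gamma>^2)"

definition outer :: "real^'n \<Rightarrow> real^'n \<Rightarrow> real^'n^'n" where
  "outer x y = (\<chi> i j. x$i * y$j)"

text \<open>\<open>(a \<wedge> b) x = (a \<bullet> x) b - (b \<bullet> x) a\<close>, i.e. the matrix \<open>b a\<^sup>\<dagger> - a b\<^sup>\<dagger>\<close>.\<close>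
definition wedge :: "real^'n \<Rightarrow> real^'n \<Rightarrow> real^'n^'n" where
  "wedge a b = outer b a - outer a b"

definition skew :: "real^'n^'n \<Rightarrow> bool" where
  "skew M \<longleftrightarrow> transpose M = - M"

definition collision_map ::
  "real \<Rightarrow> real \<Rightarrow> real^'n \<Rightarrow> (real^'n) \<times> (real^'n^'n) \<Rightarrow> (real^'n) \<times> (real^'n^'n)" where
  "collision_map \<gamma> r \<nu> uU = (case uU of (u, U) \<Rightarrow>
     (nsb_c \<gamma> *\<^sub>R u - ((nsb_s \<gamma> / \<gamma>) * (u \<bullet> \<nu>)) *\<^sub>R \<nu> + (nsb_s \<gamma> * \<gamma> * r) *\<^sub>R (U *v \<nu>),
      (nsb_s \<gamma> / (\<gamma> * r)) *\<^sub>R wedge \<nu> u + U - (nsb_s \<gamma> / \<gamma>) *\<^sub>R wedge \<nu> (U *v \<nu>)))"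

definition transv :: "real^'n \<Rightarrow> real^'n \<Rightarrow> real^'n" where
  "transv e x = x - (x \<bullet> e) *\<^sub>R e"

text \<open>\<open>\<Lambda> = (\<sigma>, w) \<in> R \<oplus> W\<close>, identified with \<open>\<sigma> e + w \<in> R^n\<close>
  (an isometric identification), where \<open>\<sigma> = u \<bullet> e\<close>, \<open>w = \<gamma> r U e\<close>.\<close>
definition Lambda_vec :: "real \<Rightarrow> real \<Rightarrow> real^'n \<Rightarrow> real^'n \<Rightarrow> real^'n^'n \<Rightarrow> real^'n" where
  "Lambda_vec \<gamma> r e u U = (u \<bullet> e) *\<^sub>R e + (\<gamma> * r) *\<^sub>R (U *v e)"

text \<open>The map \<open>\<A>(a)\<close> of \<open>R \<oplus> W \<cong> R^n\<close> with block matrix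
  \<open>((c, -s \<nu>\<^sup>\<dagger>), (-s \<nu>, -c \<nu> \<nu>\<^sup>\<dagger> + \<Pi>))\<close>, under the identification above;
  \<open>\<Pi>\<close> (projection in W onto \<open>\<nu>\<^sup>\<perp>\<close>) becomes \<open>I - e e\<^sup>\<dagger> - \<nu> \<nu>\<^sup>\<dagger>\<close>.\<close>
definition Amat :: "real \<Rightarrow> real^'n \<Rightarrow> real^'n \<Rightarrow> real^'n^'n" where
  "Amat \<gamma> e \<nu> =
     nsb_c \<gamma> *\<^sub>R outer e e - nsb_s \<gamma> *\<^sub>R outer e \<nu> - nsb_s \<gamma> *\<^sub>R outer \<nu> e
     - nsb_c \<gamma> *\<^sub>R outer \<nu> \<nu> + (mat 1 - outer e e - outer \<nu> \<nu>)"

definition orth_proj :: "(real^'n) set \<Rightarrow> real^'n \<Rightarrow> real^'n" where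
  "orth_proj S x = (THE y. y \<in> S \<and> (\<forall>z\<in>S. (x - y) \<bullet> z = 0))"

text \<open>A trajectory of the no-slip billiard in the solid cylinder with axis e
  (normal field \<open>nuf\<close>, giving the inward unit normal at collision points),
  transversely periodic of period 2, with all intercollision times equal to 1.
  \<open>a j\<close>: j-th collision point; \<open>(u j, U j)\<close>: post-collision velocities.\<close>
definition nsb_traj ::
  "real \<Rightarrow> real \<Rightarrow> real^'n \<Rightarrow> ((real^'n) \<Rightarrow> (real^'n)) \<Rightarrow>
   (nat \<Rightarrow> (real^'n)) \<Rightarrow> (nat \<Rightarrow> (real^'n)) \<Rightarrow> (nat \<Rightarrow> (real^'n^'n)) \<Rightarrow> bool" where
  "nsb_traj \<gamma> r e nuf a u U \<longleftrightarrow>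
     (\<forall>j. skew (U j)) \<and>
     (\<forall>j. a (Suc j) = a j + u j) \<and>
     (\<forall>j. (u (Suc j), U (Suc j)) = collision_map \<gamma> r (nuf (a (Suc j))) (u j, U j)) \<and>
     (\<forall>j. transv e (a (j + 2)) = transv e (a j))"

end

theory Submission
  imports Defs
begin

lemma outer_mv: "outer x y *v z = (y \<bullet> z) *\<^sub>R x"
  by (simp add: outer_def matrix_vector_mult_def inner_vec_def vec_eq_iff sum_distrib_left mult_ac)

lemma wedge_mv: "wedge a b *v x = (a \<bullet> x) *\<^sub>R b - (b \<bullet> x) *\<^sub>R a"
  by (simp add: wedge_def matrix_vector_mult_diff_rdistrib outer_mv)

lemma dot_transpose: fixes M :: "real^'n^'m" shows "(M *v x) \<bullet> y = x \<bullet> (transpose M *v y)"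
proof -
  have "(M *v x) \<bullet> y = (\<Sum>i\<in>UNIV. \<Sum>j\<in>UNIV. M $ i $ j * x $ j * y $ i)"
    unfolding matrix_vector_mult_def inner_vec_def
    by (simp add: inner_real_def sum_distrib_right)
  also have "\<dots> = (\<Sum>j\<in>UNIV. \<Sum>i\<in>UNIV. M $ i $ j * x $ j * y $ i)"
    by (rule sum.swap)
  also have "\<dots> = x \<bullet> (transpose M *v y)"
    unfolding matrix_vector_mult_def inner_vec_def transpose_def
    by (simp add: inner_real_def sum_distrib_left mult_ac)
  finally show ?thesis .
qed

lemma Amat_mv: "Amat \<gamma> e \<nu> *v x = (nsb_c \<gamma> * (e \<bullet> x)) *\<^sub>R e - (nsb_s \<gamma> * (\<nu> \<bullet> x)) *\<^sub>R e
   - (nsb_s \<gamma> * (e \<bullet> x)) *\<^sub>R \<nu> - (nsb_c \<gamma> * (\<nu> \<bullet> x)) *\<^sub>R \<nu> + x - (e \<bullet> x) *\<^sub>R e - (\<nu> \<bullet> x) *\<^sub>R \<nu>"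
  by (simp add: Amat_def matrix_vector_mult_diff_rdistrib matrix_vector_mult_add_rdistrib
      outer_mv scaleR_matrix_vector_assoc[symmetric])

lemma cs_facts: assumes "\<gamma> > 0"
  shows "nsb_c \<gamma> ^ 2 + nsb_s \<gamma> ^ 2 = 1" "1 + nsb_c \<gamma> > 0" "nsb_s \<gamma> = \<gamma> * (1 + nsb_c \<gamma>)"
    "nsb_s \<gamma> / \<gamma> = 1 + nsb_c \<gamma>"
proof -
  have d: "1 + \<gamma>^2 > 0" by (simp add: add_pos_nonneg)
  have n: "(1 - \<gamma>^2)^2 + (2*\<gamma>)^2 = (1 + \<gamma>^2)^2" by (simp add: algebra_simps power2_eq_square)
  have "nsb_c \<gamma> ^ 2 + nsb_s \<gamma> ^ 2 = ((1 - \<gamma>^2)^2 + (2*\<gamma>)^2) / (1 + \<gamma>^2)^2"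
    by (simp add: nsb_c_def nsb_s_def power_divide add_divide_distrib)
  then show "nsb_c \<gamma> ^ 2 + nsb_s \<gamma> ^ 2 = 1" using d n by simp
  show "1 + nsb_c \<gamma> > 0" using d by (simp add: nsb_c_def field_simps)
  show "nsb_s \<gamma> = \<gamma> * (1 + nsb_c \<gamma>)" using d by (simp add: nsb_c_def nsb_s_def field_simps)
  then show "nsb_s \<gamma> / \<gamma> = 1 + nsb_c \<gamma>" using assms by simp
qed

definition hh :: "real^'n \<Rightarrow> real^'n^'n" where
  "hh w = mat 1 - 2 *\<^sub>R outer w w"

lemma hh_mv: "hh w *v x = x - (2 * (w \<bullet> x)) *\<^sub>R w"
  by (simp add: hh_def matrix_vector_mult_diff_rdistrib outer_mv scaleR_matrix_vector_assoc[symmetric])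

lemma hh_sym: "transpose (hh w) = hh w"
  by (simp add: hh_def transpose_def mat_def outer_def vec_eq_iff mult.commute)

lemma hh_invol: assumes "norm w = 1" shows "hh w ** hh w = mat 1"
proof -
  have ww: "w \<bullet> w = 1" using assms by (simp add: norm_eq_1)
  have wx: "w \<bullet> (hh w *v x) = - (w \<bullet> x)" for x
    by (simp add: hh_mv inner_diff_right ww)
  have "hh w *v (hh w *v x) = x" for x
    by (simp add: hh_mv[of w "hh w *v x"] wx) (simp add: hh_mv)
  then show ?thesis unfolding matrix_eq
    by (simp add: matrix_vector_mul_assoc[symmetric])
qed

lemma hh_orth: assumes "norm w = 1" shows "orthogonal_matrix (hh w)"
  using hh_invol[OF assms] hh_sym[of w] unfolding orthogonal_matrix_def by simp

lemma det_hh: fixes w :: "real^'n" assumes "norm w = 1" shows "det (hh w) = -1"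
proof -
  obtain k :: 'n where True by simp
  obtain B where B: "orthogonal_matrix B" "B *v axis k 1 = w"
    using orthogonal_matrix_exists_basis[OF assms] by metis
  have tw: "transpose B *v w = axis k 1"
    using B unfolding orthogonal_matrix_def by (metis matrix_vector_mul_assoc matrix_vector_mul_lid)
  have conj: "transpose B ** hh w ** B = hh (axis k (1::real))"
  proof -
    have BB: "transpose B *v (B *v x) = x" for x
      using B(1) unfolding orthogonal_matrix_def by (metis matrix_vector_mul_assoc matrix_vector_mul_lid)
    have "(transpose B ** hh w ** B) *v x = hh (axis k 1) *v x" for x
    proof -
      have "(transpose B ** hh w ** B) *v x = transpose B *v (hh w *v (B *v x))"
        by (simp add: matrix_vector_mul_assoc matrix_mul_assoc)
      also have "\<dots> = transpose B *v (B *v x) - (2 * (w \<bullet> (B *v x))) *\<^sub>R (transpose B *v w)"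
        by (simp only: hh_mv matrix_vector_mult_diff_distrib matrix_vector_mult_scaleR)
      also have "\<dots> = x - (2 * (w \<bullet> (B *v x))) *\<^sub>R (transpose B *v w)"
        by (simp only: BB)
      also have "w \<bullet> (B *v x) = (transpose B *v w) \<bullet> x"
        by (metis dot_transpose inner_commute)
      finally show ?thesis by (simp only: hh_mv tw)
    qed
    then show ?thesis unfolding matrix_eq by blast
  qed
  have dB: "det B * det B = 1"
    using det_orthogonal_matrix[OF B(1)] by auto
  have "det (hh (axis k (1::real)) :: real^'n^'n) = (\<Prod>i\<in>UNIV. (hh (axis k (1::real)) :: real^'n^'n) $ i $ i)"
    by (rule det_diagonal) (auto simp add: hh_def mat_def outer_def axis_def)
  also have "\<dots> = (\<Prod>i\<in>UNIV. if i = k then -1 else 1)"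
    by (rule prod.cong) (auto simp: hh_def mat_def outer_def axis_def)
  also have "\<dots> = -1" by (simp add: prod.delta)
  finally have "det (hh (axis k (1::real)) :: real^'n^'n) = -1" .
  then have "det (transpose B) * det (hh w) * det B = -1"
    using conj by (metis det_mul)
  then have "(det B * det B) * det (hh w) = -1" by (simp add: algebra_simps)
  then show ?thesis using dB by simp
qed


lemma Amat_mv2:
  assumes "norm e = 1" "norm \<nu> = 1" "\<nu> \<bullet> e = 0"
  shows "Amat \<gamma> e \<nu> *v x = x + ((nsb_c \<gamma> - 1) * (e \<bullet> x) - nsb_s \<gamma> * (\<nu> \<bullet> x)) *\<^sub>R e
     + (- nsb_s \<gamma> * (e \<bullet> x) - (1 + nsb_c \<gamma>) * (\<nu> \<bullet> x)) *\<^sub>R \<nu>"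
  by (simp add: Amat_mv algebra_simps)

lemma vec_rearr: fixes x e v :: "real^'n" and t p q :: real shows "x - (t::real) *\<^sub>R (p *\<^sub>R e + q *\<^sub>R v) = x + (- (t * p)) *\<^sub>R e + (- (t * q)) *\<^sub>R v"
proof -
  have "x - (t::real) *\<^sub>R (p *\<^sub>R e + q *\<^sub>R v) = x - (t * p) *\<^sub>R e - (t * q) *\<^sub>R v"
    by (simp only: scaleR_add_right scaleR_scaleR diff_diff_eq)
  then show ?thesis by (simp only: scaleR_minus_left diff_conv_add_uminus)
qed

lemma Amat_hh:
  fixes e \<nu> :: "real^'n"
  assumes g: "\<gamma> > 0" and e: "norm e = 1" and n: "norm \<nu> = 1" and o: "\<nu> \<bullet> e = 0"
  defines "w \<equiv> (1 / sqrt (2 * (1 + nsb_c \<gamma>))) *\<^sub>R (nsb_s \<gamma> *\<^sub>R e + (1 + nsb_c \<gamma>) *\<^sub>R \<nu>)"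
  shows "Amat \<gamma> e \<nu> = hh w" "norm w = 1"
proof -
  let ?c = "nsb_c \<gamma>" and ?s = "nsb_s \<gamma>"
  define k where "k = 1 / sqrt (2 * (1 + ?c))"
  have wk: "w = k *\<^sub>R (?s *\<^sub>R e + (1 + ?c) *\<^sub>R \<nu>)" by (simp add: w_def k_def)
  have cp: "1 + ?c > 0" using cs_facts[OF g] by simp
  have k2: "k^2 = 1 / (2 * (1 + ?c))" using cp by (simp add: k_def power_divide)
  have ee: "e \<bullet> e = 1" using e by (simp add: norm_eq_1)
  have nn: "\<nu> \<bullet> \<nu> = 1" using n by (simp add: norm_eq_1)
  have en: "e \<bullet> \<nu> = 0" using o by (simp add: inner_commute)
  have cs: "?c^2 + ?s^2 = 1" using cs_facts[OF g] by simp
  have ww: "w \<bullet> w = k^2 * (?s^2 + (1 + ?c)^2)"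
    by (simp add: wk inner_add_left inner_add_right ee nn en o power2_eq_square algebra_simps)
  also have "?s^2 + (1 + ?c)^2 = 2 * (1 + ?c)" using cs by (simp add: power2_eq_square algebra_simps)
  also have "k^2 * (2 * (1 + ?c)) = 1" using k2 cp by simp
  finally have ww1: "w \<bullet> w = 1" .
  then show "norm w = 1" by (simp add: norm_eq_1)
  have "Amat \<gamma> e \<nu> *v x = hh w *v x" for x
  proof -
    let ?a = "e \<bullet> x" and ?b = "\<nu> \<bullet> x"
    have wx: "w \<bullet> x = k * (?s * ?a + (1 + ?c) * ?b)"
      by (simp add: wk inner_add_left algebra_simps)
    have "hh w *v x = x - (2 * (w \<bullet> x) * k) *\<^sub>R (?s *\<^sub>R e + (1 + ?c) *\<^sub>R \<nu>)"
      by (simp add: hh_mv wk)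
    also have "2 * (w \<bullet> x) * k = (2 * k^2) * (?s * ?a + (1 + ?c) * ?b)"
      by (simp add: wx power2_eq_square algebra_simps)
    also have "\<dots> = (?s * ?a + (1 + ?c) * ?b) / (1 + ?c)"
      using k2 cp by (simp add: field_simps)
    finally have h: "hh w *v x = x - ((?s * ?a + (1 + ?c) * ?b) / (1 + ?c)) *\<^sub>R (?s *\<^sub>R e + (1 + ?c) *\<^sub>R \<nu>)" .
    have c1: "- (((?s * ?a + (1 + ?c) * ?b) / (1 + ?c)) * ?s) = (?c - 1) * ?a - ?s * ?b"
    proof -
      have "?s^2 = (1 - ?c) * (1 + ?c)" using cs by (simp add: algebra_simps power2_eq_square)
      have cs': "?c * (?c * ?a) + ?s * (?s * ?a) = ?a"
      proof -
        have "?c * (?c * ?a) + ?s * (?s * ?a) = (?c^2 + ?s^2) * ?a" by (simp add: algebra_simps power2_eq_square)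
        then show ?thesis using cs by simp
      qed
      show ?thesis using cp cs' by (simp add: field_simps power2_eq_square)
    qed
    have c2: "- (((?s * ?a + (1 + ?c) * ?b) / (1 + ?c)) * (1 + ?c)) = - ?s * ?a - (1 + ?c) * ?b"
      using cp by simp
    have "hh w *v x = x + (- (((?s * ?a + (1 + ?c) * ?b) / (1 + ?c)) * ?s)) *\<^sub>R e
        + (- (((?s * ?a + (1 + ?c) * ?b) / (1 + ?c)) * (1 + ?c))) *\<^sub>R \<nu>"
      unfolding h by (rule vec_rearr)
    also have "\<dots> = Amat \<gamma> e \<nu> *v x"
      unfolding c1 c2 Amat_mv2[OF e n o] ..
    finally show ?thesis by simp
  qed
  then show "Amat \<gamma> e \<nu> = hh w" unfolding matrix_eq by blast
qed


lemma neg_mv: "(- A) *v x = - (A *v (x::real^'n))"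
  by (simp add: matrix_vector_mult_def vec_eq_iff sum_negf)

lemma skew_dot: assumes "skew U" shows "(U *v x) \<bullet> y = - (x \<bullet> (U *v y))"
  using assms unfolding skew_def by (simp add: dot_transpose neg_mv)

lemma skew_self: assumes "skew U" shows "x \<bullet> (U *v x) = 0"
  using skew_dot[OF assms, of x x] by (simp add: inner_commute)

lemma step_Lambda:
  fixes e \<nu> u u' :: "real^'n" and U U' :: "real^'n^'n"
  assumes g: "\<gamma> > 0" and r: "r > 0" and e: "norm e = 1" and n: "norm \<nu> = 1" and o: "\<nu> \<bullet> e = 0"
    and sk: "skew U" and cm: "(u', U') = collision_map \<gamma> r \<nu> (u, U)"
  shows "Lambda_vec \<gamma> r e u' U' = Amat \<gamma> e \<nu> *v Lambda_vec \<gamma> r e u U"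
proof -
  let ?c = "nsb_c \<gamma>" and ?s = "nsb_s \<gamma>"
  define \<sigma> where "\<sigma> = u \<bullet> e"
  define W where "W = U *v e"
  define \<beta> where "\<beta> = \<nu> \<bullet> W"
  have u': "u' = ?c *\<^sub>R u - ((?s / \<gamma>) * (u \<bullet> \<nu>)) *\<^sub>R \<nu> + (?s * \<gamma> * r) *\<^sub>R (U *v \<nu>)"
    and U': "U' = (?s / (\<gamma> * r)) *\<^sub>R wedge \<nu> u + U - (?s / \<gamma>) *\<^sub>R wedge \<nu> (U *v \<nu>)"
    using cm by (simp_all add: collision_map_def)
  have ee: "e \<bullet> e = 1" using e by (simp add: norm_eq_1)
  have eo: "e \<bullet> \<nu> = 0" using o by (simp add: inner_commute)
  have Une: "(U *v \<nu>) \<bullet> e = - \<beta>" using skew_dot[OF sk, of \<nu> e] by (simp add: \<beta>_def W_def)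
  have eW: "e \<bullet> W = 0" using skew_self[OF sk] by (simp add: W_def)
  have ue: "u' \<bullet> e = ?c * \<sigma> - ?s * \<gamma> * r * \<beta>"
    by (simp add: u' inner_add_left inner_diff_left o Une \<sigma>_def)
  have Ue: "U' *v e = W + (- (?s / (\<gamma> * r) * \<sigma>) - ?s / \<gamma> * \<beta>) *\<^sub>R \<nu>"
  proof -
    have "U' *v e = (?s / (\<gamma> * r)) *\<^sub>R (wedge \<nu> u *v e) + W - (?s / \<gamma>) *\<^sub>R (wedge \<nu> (U *v \<nu>) *v e)"
      by (simp add: U' matrix_vector_mult_diff_rdistrib matrix_vector_mult_add_rdistrib
          scaleR_matrix_vector_assoc W_def)
    also have "\<dots> = (?s / (\<gamma> * r)) *\<^sub>R (- \<sigma> *\<^sub>R \<nu>) + W - (?s / \<gamma>) *\<^sub>R (\<beta> *\<^sub>R \<nu>)"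
      by (simp add: wedge_mv o Une \<sigma>_def)
    finally show ?thesis by (simp add: algebra_simps)
  qed
  have L': "Lambda_vec \<gamma> r e u' U' = (?c * \<sigma> - ?s * \<gamma> * r * \<beta>) *\<^sub>R e + (\<gamma> * r) *\<^sub>R W
      + (\<gamma> * r * (- (?s / (\<gamma> * r) * \<sigma>) - ?s / \<gamma> * \<beta>)) *\<^sub>R \<nu>"
    by (simp add: Lambda_vec_def ue Ue scaleR_add_right)
  have L: "Lambda_vec \<gamma> r e u U = \<sigma> *\<^sub>R e + (\<gamma> * r) *\<^sub>R W"
    by (simp add: Lambda_vec_def \<sigma>_def W_def)
  have eL: "e \<bullet> Lambda_vec \<gamma> r e u U = \<sigma>" by (simp add: L inner_add_right ee eW)
  have nL: "\<nu> \<bullet> Lambda_vec \<gamma> r e u U = \<gamma> * r * \<beta>" by (simp add: L inner_add_right o \<beta>_def)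
  have R: "Amat \<gamma> e \<nu> *v Lambda_vec \<gamma> r e u U = (?c * \<sigma> - ?s * \<gamma> * r * \<beta>) *\<^sub>R e + (\<gamma> * r) *\<^sub>R W
      + (- ?s * \<sigma> - (1 + ?c) * (\<gamma> * r * \<beta>)) *\<^sub>R \<nu>"
    unfolding Amat_mv2[OF e n o] eL nL unfolding L by (simp add: algebra_simps)
  have co: "\<gamma> * r * (- (?s / (\<gamma> * r) * \<sigma>) - ?s / \<gamma> * \<beta>) = - ?s * \<sigma> - (1 + ?c) * (\<gamma> * r * \<beta>)"
    using g r cs_facts(3)[OF g] by (simp add: field_simps)
  show ?thesis unfolding L' R co ..
qed


lemma orth_proj_unique:
  assumes S: "subspace S" and y: "y \<in> S" and yo: "\<forall>z\<in>S. (x - y) \<bullet> z = 0"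
  shows "orth_proj S x = y"
proof -
  have uniq: "y1 = y2" if "y1 \<in> S" "\<forall>z\<in>S. (x - y1) \<bullet> z = 0" "y2 \<in> S" "\<forall>z\<in>S. (x - y2) \<bullet> z = 0" for y1 y2
  proof -
    have d: "y1 - y2 \<in> S" using that S by (simp add: subspace_diff)
    have "(x - y2) \<bullet> (y1 - y2) - (x - y1) \<bullet> (y1 - y2) = 0" using that d by simp
    then have "(y1 - y2) \<bullet> (y1 - y2) = 0" by (simp add: inner_diff_left inner_diff_right algebra_simps)
    then show ?thesis by simp
  qed
  show ?thesis unfolding orth_proj_def
    by (rule the_equality) (use y yo uniq in auto)
qed

lemma orth_proj_props:
  assumes S: "subspace S"
  shows "orth_proj S x \<in> S" "\<forall>z\<in>S. (x - orth_proj S x) \<bullet> z = 0"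
proof -
  obtain y z where y: "y \<in> span S" and z: "\<And>w. w \<in> span S \<Longrightarrow> orthogonal z w" and xyz: "x = y + z"
    by (rule orthogonal_subspace_decomp_exists[of S x]) blast
  have sp: "span S = S" using S by (simp add: span_eq_iff)
  have yS: "y \<in> S" using y sp by simp
  have yo: "\<forall>w\<in>S. (x - y) \<bullet> w = 0" using z sp xyz by (simp add: orthogonal_def)
  have "orth_proj S x = y" by (rule orth_proj_unique[OF S yS yo])
  then show "orth_proj S x \<in> S" "\<forall>z\<in>S. (x - orth_proj S x) \<bullet> z = 0" using yS yo by auto
qed

lemma orth_matrix_inner:
  fixes R :: "real^'n^'n"
  assumes "orthogonal_matrix R"
  shows "transpose R *v (R *v x) = x" "R *v (transpose R *v x) = x" "norm (R *v x) = norm x"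
proof -
  show t1: "transpose R *v (R *v x) = x" for x
    using assms unfolding orthogonal_matrix_def by (metis matrix_vector_mul_assoc matrix_vector_mul_lid)
  show "R *v (transpose R *v x) = x"
    using assms unfolding orthogonal_matrix_def by (metis matrix_vector_mul_assoc matrix_vector_mul_lid)
  have "(R *v x) \<bullet> (R *v x) = x \<bullet> x" by (simp only: dot_transpose t1)
  then show "norm (R *v x) = norm x" by (simp add: norm_eq_sqrt_inner)
qed

lemma nuf_transv:
  assumes "\<forall>x. nuf x \<bullet> e = 0 \<and> norm (nuf x) = 1 \<and> (\<forall>t. nuf (x + t *\<^sub>R e) = nuf x)"
  shows "nuf (transv e x) = nuf x"
proof -
  have "transv e x = x + (- (x \<bullet> e)) *\<^sub>R e" by (simp add: transv_def)
  moreover have "nuf (x + (- (x \<bullet> e)) *\<^sub>R e) = nuf x" using assms by blast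
  ultimately show ?thesis by simp
qed


lemma traj_main:
  fixes \<gamma> r :: real and e :: "real^'n" and nuf :: "(real^'n) \<Rightarrow> (real^'n)"
    and a u :: "nat \<Rightarrow> (real^'n)" and U :: "nat \<Rightarrow> (real^'n^'n)"
  assumes g: "\<gamma> > 0" and r: "r > 0" and e: "norm e = 1"
    and nuf: "\<forall>x. nuf x \<bullet> e = 0 \<and> norm (nuf x) = 1 \<and> (\<forall>t. nuf (x + t *\<^sub>R e) = nuf x)"
    and traj: "nsb_traj \<gamma> r e nuf a u U"
    and h0: "a 0 \<bullet> e = 0"
  shows "\<exists>hhat :: nat \<Rightarrow> real. bounded (range hhat) \<and>
         (\<forall>l. a l \<bullet> e = hhat l + real (l div 2) *
           (((1 + nsb_c \<gamma>) *\<^sub>R e - nsb_s \<gamma> *\<^sub>R nuf (a 1)) \<bullet>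
            orth_proj {x. (Amat \<gamma> e (nuf (a 1)) ** Amat \<gamma> e (nuf (a 2))) *v x = x}
              (Lambda_vec \<gamma> r e (u 0) (U 0))))"
proof -
  let ?c = "nsb_c \<gamma>" and ?s = "nsb_s \<gamma>"
  define \<nu> where "\<nu> j = nuf (a j)" for j
  define L where "L j = Lambda_vec \<gamma> r e (u j) (U j)" for j
  define A1 where "A1 = Amat \<gamma> e (\<nu> 1)"
  define A2 where "A2 = Amat \<gamma> e (\<nu> 2)"
  define R where "R = A2 ** A1"
  define \<xi> where "\<xi> = (1 + ?c) *\<^sub>R e - ?s *\<^sub>R \<nu> 1"
  have sk: "\<And>j. skew (U j)" and ad: "\<And>j. a (Suc j) = a j + u j"
    and cm: "\<And>j. (u (Suc j), U (Suc j)) = collision_map \<gamma> r (nuf (a (Suc j))) (u j, U j)"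
    and per: "\<And>j. transv e (a (j + 2)) = transv e (a j)"
    using traj unfolding nsb_traj_def by auto
  have nu_per: "\<nu> (j + 2) = \<nu> j" for j
    using nuf_transv[OF nuf, of "a (j+2)"] nuf_transv[OF nuf, of "a j"] per[of j] by (simp add: \<nu>_def)
  have nu_odd: "\<nu> (Suc (2 * k)) = \<nu> 1" for k
  proof (induction k)
    case (Suc k)
    have "Suc (2 * Suc k) = Suc (2 * k) + 2" by simp
    then show ?case using nu_per[of "Suc (2 * k)"] Suc by simp
  qed simp
  have nu_even: "\<nu> (Suc (Suc (2 * k))) = \<nu> 2" for k
  proof (induction k)
    case (Suc k)
    have "Suc (Suc (2 * Suc k)) = Suc (Suc (2 * k)) + 2" by simp
    then show ?case using nu_per[of "Suc (Suc (2 * k))"] Suc by simp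
  qed (simp add: numeral_2_eq_2)
  have nun: "norm (\<nu> j) = 1" "\<nu> j \<bullet> e = 0" for j using nuf by (auto simp: \<nu>_def)
  have en: "e \<bullet> \<nu> j = 0" for j using nun(2)[of j] by (simp add: inner_commute)
  have ee: "e \<bullet> e = 1" using e by (simp add: norm_eq_1)
  have Lstep: "L (Suc j) = Amat \<gamma> e (\<nu> (Suc j)) *v L j" for j
    unfolding L_def \<nu>_def by (rule step_Lambda[OF g r e nun[unfolded \<nu>_def] sk cm])
  have hstep: "a (Suc j) \<bullet> e = a j \<bullet> e + e \<bullet> L j" for j
    using skew_self[OF sk[of j], of e]
    by (simp add: ad L_def Lambda_vec_def inner_add_left inner_add_right ee inner_commute)
  obtain w1 where w1: "A1 = hh w1" "norm w1 = 1"
    using Amat_hh[OF g e nun(1)[of 1] nun(2)[of 1]] unfolding A1_def by blast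
  obtain w2 where w2: "A2 = hh w2" "norm w2 = 1"
    using Amat_hh[OF g e nun(1)[of 2] nun(2)[of 2]] unfolding A2_def by blast
  have A1inv: "A1 *v (A1 *v x) = x" for x
    using hh_invol[OF w1(2)] w1(1) by (metis matrix_vector_mul_assoc matrix_vector_mul_lid)
  have A2inv: "A2 *v (A2 *v x) = x" for x
    using hh_invol[OF w2(2)] w2(1) by (metis matrix_vector_mul_assoc matrix_vector_mul_lid)
  have Rorth: "orthogonal_matrix R"
    unfolding R_def w1(1) w2(1) by (rule orthogonal_matrix_mul[OF hh_orth[OF w2(2)] hh_orth[OF w1(2)]])
  have Rv: "R *v x = A2 *v (A1 *v x)" for x by (simp add: R_def matrix_vector_mul_assoc)
  have fixeq: "{x. (Amat \<gamma> e (nuf (a 1)) ** Amat \<gamma> e (nuf (a 2))) *v x = x} = {x. R *v x = x}"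
  proof -
    have "(A1 *v (A2 *v x) = x) \<longleftrightarrow> (A2 *v (A1 *v x) = x)" for x
    proof
      assume h: "A1 *v (A2 *v x) = x"
      have "A2 *v x = A1 *v x" using arg_cong[OF h, of "\<lambda>v. A1 *v v"] A1inv by simp
      then show "A2 *v (A1 *v x) = x" using A2inv by metis
    next
      assume h: "A2 *v (A1 *v x) = x"
      have "A1 *v x = A2 *v x" using arg_cong[OF h, of "\<lambda>v. A2 *v v"] A2inv by simp
      then show "A1 *v (A2 *v x) = x" using A1inv by metis
    qed
    moreover have "Amat \<gamma> e (nuf (a 1)) = A1" "Amat \<gamma> e (nuf (a 2)) = A2"
      by (simp_all add: A1_def A2_def \<nu>_def)
    ultimately show ?thesis
      by (simp add: matrix_vector_mul_assoc[symmetric] Rv)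
  qed
  define S where "S = {x. R *v x = x}"
  have subS: "subspace S"
    unfolding S_def subspace_def
    by (simp add: matrix_vector_right_distrib matrix_vector_mult_scaleR)
  define p where "p = orth_proj S (L 0)"
  define y where "y = L 0 - p"
  have pS: "R *v p = p" using orth_proj_props(1)[OF subS] by (simp add: p_def S_def)
  have yo: "\<And>v. R *v v = v \<Longrightarrow> y \<bullet> v = 0" using orth_proj_props(2)[OF subS] by (simp add: p_def y_def S_def)
  note Ri = orth_matrix_inner[OF Rorth]
  \<comment> \<open>y lies in the range of R - I\<close>
  define T where "T = range (\<lambda>z. R *v z - z)"
  have linT: "linear (\<lambda>z. R *v z - z)"
    unfolding linear_iff by (simp add: matrix_vector_right_distrib matrix_vector_mult_scaleR algebra_simps)
  have subT: "subspace T" unfolding T_def by (rule linear_subspace_image[OF linT subspace_UNIV])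
  obtain y1 y2 where y1: "y1 \<in> span T" and y2: "\<And>w. w \<in> span T \<Longrightarrow> orthogonal y2 w" and yy: "y = y1 + y2"
    by (rule orthogonal_subspace_decomp_exists[of T y]) blast
  have spT: "span T = T" using subT by (simp add: span_eq_iff)
  have "(R *v z - z) \<bullet> y2 = 0" for z
  proof -
    have "R *v z - z \<in> span T" by (rule span_base) (simp add: T_def)
    then have "orthogonal y2 (R *v z - z)" using y2 by blast
    then show ?thesis by (simp add: orthogonal_def inner_commute)
  qed
  then have "z \<bullet> (transpose R *v y2 - y2) = 0" for z
    by (simp add: inner_diff_left inner_diff_right dot_transpose)
  then have "transpose R *v y2 - y2 = 0" using inner_eq_zero_iff by blast
  then have "transpose R *v y2 = y2" by simp
  then have "R *v y2 = y2" using Ri(2)[of y2] by simp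
  then have "y \<bullet> y2 = 0" using yo by simp
  moreover have "y1 \<bullet> y2 = 0" using y2[OF y1] by (simp add: orthogonal_def inner_commute)
  ultimately have "y2 \<bullet> y2 = 0" using yy by (simp add: inner_add_left)
  then have "y = y1" using yy by simp
  moreover have "y1 \<in> T" using y1 spT by simp
  ultimately obtain z where yz: "y = R *v z - z" unfolding T_def by blast
  define Z where "Z k = ((\<lambda>v. R *v v) ^^ k) z" for k
  have ZS: "Z (Suc k) = R *v Z k" for k by (simp add: Z_def)
  have Z0: "Z 0 = z" by (simp add: Z_def)
  have normZ: "norm (Z k) = norm z" for k by (induction k) (simp_all add: Z0 ZS Ri(3))
  have Lodd: "L (Suc (2 * k)) = A1 *v L (2 * k)" for k
    using Lstep[of "2*k"] nu_odd[of k] by (simp add: A1_def)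
  have Lev2: "L (2 * Suc k) = R *v L (2 * k)" for k
  proof -
    have "L (2 * Suc k) = L (Suc (Suc (2 * k)))" by simp
    also have "\<dots> = A2 *v L (Suc (2 * k))" using Lstep[of "Suc (2*k)"] nu_even[of k] by (simp add: A2_def)
    finally show ?thesis by (simp add: Lodd Rv)
  qed
  have Lev: "L (2 * k) = p + (Z (Suc k) - Z k)" for k
  proof (induction k)
    case 0
    have "L 0 = p + y" by (simp add: y_def)
    then show ?case using yz by (simp add: ZS Z0)
  next
    case (Suc k)
    show ?case using Suc
      by (simp only: Lev2 matrix_vector_right_distrib matrix_vector_mult_diff_distrib pS ZS[symmetric])
  qed
  have xi: "e \<bullet> x + e \<bullet> (A1 *v x) = \<xi> \<bullet> x" for x
    unfolding A1_def Amat_mv2[OF e nun(1) nun(2)] \<xi>_def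
    by (simp add: inner_add_right inner_diff_right inner_add_left inner_diff_left ee en algebra_simps)
  have hev: "a (2 * k) \<bullet> e = real k * (\<xi> \<bullet> p) + \<xi> \<bullet> (Z k - z)" for k
  proof (induction k)
    case 0
    show ?case using h0 by (simp add: Z0)
  next
    case (Suc k)
    have "a (2 * Suc k) \<bullet> e = a (Suc (Suc (2 * k))) \<bullet> e" by simp
    also have "\<dots> = a (2 * k) \<bullet> e + (e \<bullet> L (2 * k) + e \<bullet> (A1 *v L (2 * k)))"
      by (simp only: hstep Lodd add.assoc)
    also have "\<dots> = a (2 * k) \<bullet> e + \<xi> \<bullet> L (2 * k)" by (simp only: xi)
    also have "\<dots> = real (Suc k) * (\<xi> \<bullet> p) + \<xi> \<bullet> (Z (Suc k) - z)"
    proof -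
      have "\<xi> \<bullet> L (2 * k) = \<xi> \<bullet> p + \<xi> \<bullet> Z (Suc k) - \<xi> \<bullet> Z k"
        by (simp add: Lev inner_add_right inner_diff_right)
      then show ?thesis using Suc by (simp add: inner_diff_right algebra_simps)
    qed
    finally show ?case .
  qed
  have hodd: "a (Suc (2 * k)) \<bullet> e = real k * (\<xi> \<bullet> p) + \<xi> \<bullet> (Z k - z) + e \<bullet> L (2 * k)" for k
    using hstep[of "2*k"] hev[of k] by simp
  define hhat where "hhat l = a l \<bullet> e - real (l div 2) * (\<xi> \<bullet> p)" for l
  define B where "B = norm \<xi> * (2 * norm z) + (norm p + 2 * norm z)"
  have bZ: "\<bar>\<xi> \<bullet> (Z k - z)\<bar> \<le> norm \<xi> * (2 * norm z)" for k
  proof -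
    have "\<bar>\<xi> \<bullet> (Z k - z)\<bar> \<le> norm \<xi> * norm (Z k - z)" by (rule Cauchy_Schwarz_ineq2)
    also have "norm (Z k - z) \<le> 2 * norm z"
      using norm_triangle_ineq4[of "Z k" z] normZ[of k] by simp
    then have "norm \<xi> * norm (Z k - z) \<le> norm \<xi> * (2 * norm z)" by (simp add: mult_left_mono)
    finally show ?thesis .
  qed
  have bL: "\<bar>e \<bullet> L (2 * k)\<bar> \<le> norm p + 2 * norm z" for k
  proof -
    have "\<bar>e \<bullet> L (2 * k)\<bar> \<le> norm e * norm (L (2 * k))" by (rule Cauchy_Schwarz_ineq2)
    also have "\<dots> = norm (p + (Z (Suc k) - Z k))" using e by (simp add: Lev)
    also have "\<dots> \<le> norm p + norm (Z (Suc k) - Z k)" by (rule norm_triangle_ineq)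
    also have "norm (Z (Suc k) - Z k) \<le> 2 * norm z"
      using norm_triangle_ineq4[of "Z (Suc k)" "Z k"] normZ by simp
    finally show ?thesis by simp
  qed
  have hb: "\<bar>hhat l\<bar> \<le> B" for l
  proof -
    have "l = 2 * (l div 2) \<or> l = Suc (2 * (l div 2))" by presburger
    then obtain k where "l = 2 * k \<or> l = Suc (2 * k)" by blast
    then show ?thesis
    proof
      assume l: "l = 2 * k"
      have "hhat l = \<xi> \<bullet> (Z k - z)" by (simp add: hhat_def l hev)
      then show ?thesis using bZ[of k] norm_ge_zero[of p] norm_ge_zero[of z] unfolding B_def by linarith
    next
      assume l: "l = Suc (2 * k)"
      have "Suc (2 * k) div 2 = k" by simp
      then have "hhat l = \<xi> \<bullet> (Z k - z) + e \<bullet> L (2 * k)" by (simp add: hhat_def l hodd)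
      moreover have "\<bar>\<xi> \<bullet> (Z k - z) + e \<bullet> L (2 * k)\<bar> \<le> \<bar>\<xi> \<bullet> (Z k - z)\<bar> + \<bar>e \<bullet> L (2 * k)\<bar>"
        by (rule abs_triangle_ineq)
      ultimately show ?thesis using bZ[of k] bL[of k] unfolding B_def by linarith
    qed
  qed
  have "bounded (range hhat)" unfolding bounded_iff using hb by auto
  moreover have "\<forall>l. a l \<bullet> e = hhat l + real (l div 2) * (\<xi> \<bullet> p)" by (simp add: hhat_def)
  ultimately show ?thesis
    unfolding fixeq p_def S_def \<xi>_def \<nu>_def L_def by blast
qed


lemma fix_subspace: "subspace {x. (M::real^'n^'n) *v x = x}"
  unfolding subspace_def by (simp add: matrix_vector_right_distrib matrix_vector_mult_scaleR)

lemma orth_proj_linear: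
  assumes S: "subspace S"
  shows "orth_proj S (x + y) = orth_proj S x + orth_proj S y"
    "orth_proj S (c *\<^sub>R x) = c *\<^sub>R orth_proj S x"
    "x \<in> S \<Longrightarrow> orth_proj S x = x"
proof -
  note P = orth_proj_props[OF S]
  show "orth_proj S (x + y) = orth_proj S x + orth_proj S y"
    apply (rule orth_proj_unique[OF S])
    using P S apply (simp add: subspace_add)
  proof
    fix z assume zS: "z \<in> S"
    have "(x + y - (orth_proj S x + orth_proj S y)) \<bullet> z = (x - orth_proj S x) \<bullet> z + (y - orth_proj S y) \<bullet> z"
      by (simp add: inner_diff_left inner_add_left)
    then show "(x + y - (orth_proj S x + orth_proj S y)) \<bullet> z = 0" using P(2) zS by simp
  qed
  show "orth_proj S (c *\<^sub>R x) = c *\<^sub>R orth_proj S x"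
    apply (rule orth_proj_unique[OF S])
    using P S apply (simp add: subspace_scale)
    using P[of x] by (auto simp: inner_diff_left simp flip: scaleR_diff_right)
  show "x \<in> S \<Longrightarrow> orth_proj S x = x"
    by (rule orth_proj_unique[OF S]) auto
qed

theorem theorem5p2:
  fixes \<gamma> r :: real and e :: "real^'n" and nuf :: "(real^'n) \<Rightarrow> (real^'n)"
    and a u :: "nat \<Rightarrow> (real^'n)" and U :: "nat \<Rightarrow> (real^'n^'n)"
    and Q :: "real^'n^'n" and \<xi> :: "real^'n" and P :: "(real^'n) \<Rightarrow> (real^'n)"
  assumes gamma_pos: "\<gamma> > 0" and r_pos: "r > 0" and e_unit: "norm e = 1"
    and nuf: "\<forall>x. nuf x \<bullet> e = 0 \<and> norm (nuf x) = 1 \<and> (\<forall>t. nuf (x + t *\<^sub>R e) = nuf x)"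
    and traj: "nsb_traj \<gamma> r e nuf a u U"
    and h0: "a 0 \<bullet> e = 0"
  defines "Q \<equiv> Amat \<gamma> e (nuf (a 1)) ** Amat \<gamma> e (nuf (a 2))"
    and "\<xi> \<equiv> (1 + nsb_c \<gamma>) *\<^sub>R e - nsb_s \<gamma> *\<^sub>R nuf (a 1)"
    and "P \<equiv> orth_proj {x. Q *v x = x}"
  shows "(orthogonal_matrix Q \<and> det Q = 1)
    \<and> (\<exists>hhat :: nat \<Rightarrow> real. bounded (range hhat) \<and>
         (\<forall>l. a l \<bullet> e = hhat l + real (l div 2) * (\<xi> \<bullet> P (Lambda_vec \<gamma> r e (u 0) (U 0)))))
    \<and> ((\<lambda>l. (a l \<bullet> e) / real l) \<longlonglongrightarrow> (1/2) * (\<xi> \<bullet> P (Lambda_vec \<gamma> r e (u 0) (U 0))))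
    \<and> ((\<forall>x. Q *v x = x \<longrightarrow> x = 0) \<longrightarrow> bounded (range a))
    \<and> ((\<exists>x. Q *v x = x \<and> \<xi> \<bullet> x \<noteq> 0) \<longrightarrow>
         (\<exists>H :: (real^'n) set. subspace H \<and> H \<noteq> UNIV \<and>
            (\<forall>a' u' U'. nsb_traj \<gamma> r e nuf a' u' U' \<and> a' 0 \<bullet> e = 0
               \<and> (\<forall>j. transv e (a' j) = transv e (a j))
               \<and> Lambda_vec \<gamma> r e (u' 0) (U' 0) \<notin> H
               \<longrightarrow> \<not> bounded (range a'))))"
proof -
  have Qd: "Q = Amat \<gamma> e (nuf (a 1)) ** Amat \<gamma> e (nuf (a 2))" by (simp add: assms(7))
  have xid: "\<xi> = (1 + nsb_c \<gamma>) *\<^sub>R e - nsb_s \<gamma> *\<^sub>R nuf (a 1)" by (simp add: assms(8))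
  have Pd: "P = orth_proj {x. Q *v x = x}" by (simp add: assms(9))
  define \<kappa> where "\<kappa> = \<xi> \<bullet> P (Lambda_vec \<gamma> r e (u 0) (U 0))"
  have nun: "norm (nuf x) = 1" "nuf x \<bullet> e = 0" for x using nuf by auto
  have part1: "orthogonal_matrix Q \<and> det Q = 1"
  proof -
    obtain w1 where w1: "Amat \<gamma> e (nuf (a 1)) = hh w1" "norm w1 = 1"
      using Amat_hh[OF gamma_pos e_unit nun(1)[of "a 1"] nun(2)[of "a 1"]] by blast
    obtain w2 where w2: "Amat \<gamma> e (nuf (a 2)) = hh w2" "norm w2 = 1"
      using Amat_hh[OF gamma_pos e_unit nun(1)[of "a 2"] nun(2)[of "a 2"]] by blast
    show ?thesis unfolding Qd w1 w2
      using hh_orth[OF w1(2)] hh_orth[OF w2(2)] det_hh[OF w1(2)] det_hh[OF w2(2)]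
      by (simp add: orthogonal_matrix_mul det_mul)
  qed
  have gen: "\<exists>hhat :: nat \<Rightarrow> real. bounded (range hhat) \<and>
         (\<forall>l. a' l \<bullet> e = hhat l + real (l div 2) * (\<xi> \<bullet> P (Lambda_vec \<gamma> r e (u' 0) (U' 0))))"
    if tr: "nsb_traj \<gamma> r e nuf a' u' U'" and z: "a' 0 \<bullet> e = 0"
      and sm: "\<forall>j. transv e (a' j) = transv e (a j)" for a' u' U'
  proof -
    have nn: "nuf (a' j) = nuf (a j)" for j
    proof -
      have "nuf (a' j) = nuf (transv e (a' j))" using nuf_transv[OF nuf, of "a' j"] by simp
      also have "\<dots> = nuf (transv e (a j))" using sm by simp
      also have "\<dots> = nuf (a j)" using nuf_transv[OF nuf, of "a j"] by simp
      finally show ?thesis .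
    qed
    show ?thesis using traj_main[OF gamma_pos r_pos e_unit nuf tr z]
      unfolding nn Qd[symmetric] xid[symmetric] Pd[symmetric] .
  qed
  obtain hhat where hb: "bounded (range hhat)"
      and hh: "\<forall>l. a l \<bullet> e = hhat l + real (l div 2) * \<kappa>"
    using gen[OF traj h0] unfolding \<kappa>_def by blast
  have part2: "\<exists>hhat :: nat \<Rightarrow> real. bounded (range hhat) \<and>
         (\<forall>l. a l \<bullet> e = hhat l + real (l div 2) * (\<xi> \<bullet> P (Lambda_vec \<gamma> r e (u 0) (U 0))))"
    using hb hh unfolding \<kappa>_def by blast
  obtain G where G: "\<And>l. \<bar>hhat l\<bar> \<le> G" using hb unfolding bounded_iff by auto
  have part3: "(\<lambda>l. (a l \<bullet> e) / real l) \<longlonglongrightarrow> (1/2) * \<kappa>"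
  proof -
    define g where "g l = hhat l - real (l mod 2) / 2 * \<kappa>" for l
    have gb: "\<bar>g l\<bar> \<le> G + \<bar>\<kappa>\<bar>" for l
    proof -
      have m: "real (l mod 2) \<le> 1" by simp
      have "real (l mod 2) * \<bar>\<kappa>\<bar> \<le> 1 * \<bar>\<kappa>\<bar>" by (rule mult_right_mono[OF m]) simp
      then have "\<bar>real (l mod 2) / 2 * \<kappa>\<bar> \<le> \<bar>\<kappa>\<bar>"
        by (simp add: abs_mult)
      then show ?thesis using G[of l] by (simp add: g_def)
    qed
    have eq: "a l \<bullet> e = g l + real l / 2 * \<kappa>" for l
    proof -
      have eq0: "2 * (l div 2) + l mod 2 = l" by simp
      have q1: "real (2 * (l div 2) + l mod 2) = 2 * real (l div 2) + real (l mod 2)"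
        by (simp only: of_nat_add of_nat_mult of_nat_numeral)
      have q2: "real l = real (2 * (l div 2) + l mod 2)" by (subst eq0) (rule refl)
      have "real l = 2 * real (l div 2) + real (l mod 2)" using trans[OF q2 q1] .
      then show ?thesis using hh by (simp add: g_def algebra_simps)
    qed
    have g0: "(\<lambda>l. g l / real l) \<longlonglongrightarrow> 0"
    proof (rule Lim_null_comparison)
      show "\<forall>\<^sub>F l in sequentially. norm (g l / real l) \<le> (G + \<bar>\<kappa>\<bar>) * (1 / real l)"
        using gb by (auto simp: divide_le_eq abs_divide intro!: always_eventually)
      show "(\<lambda>l. (G + \<bar>\<kappa>\<bar>) * (1 / real l)) \<longlonglongrightarrow> 0"
        using tendsto_mult[OF tendsto_const lim_inverse_n', of "G + \<bar>\<kappa>\<bar>"] by simp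
    qed
    have "(\<lambda>l. g l / real l + 1/2 * \<kappa>) \<longlonglongrightarrow> 0 + 1/2 * \<kappa>"
      by (rule tendsto_add[OF g0 tendsto_const])
    then have "(\<lambda>l. g l / real l + 1/2 * \<kappa>) \<longlonglongrightarrow> 1/2 * \<kappa>" by simp
    moreover have "\<forall>\<^sub>F l in sequentially. g l / real l + 1/2 * \<kappa> = (a l \<bullet> e) / real l"
      unfolding eventually_sequentially
      by (rule exI[of _ 1]) (auto simp: eq field_simps)
    ultimately show ?thesis by (rule Lim_transform_eventually)
  qed
  have per: "\<And>j. transv e (a (j + 2)) = transv e (a j)" using traj unfolding nsb_traj_def by auto
  have tv: "transv e (a l) = transv e (a 0) \<or> transv e (a l) = transv e (a 1)" for l
  proof (induction l rule: less_induct)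
    case (less l)
    show ?case
    proof (cases "l < 2")
      case True then show ?thesis by (cases l) (auto simp: less_Suc_eq)
    next
      case False
      then have "l = (l - 2) + 2" by simp
      then obtain j where "l = j + 2" by blast
      then show ?thesis using less[of j] per[of j] by simp
    qed
  qed
  have part4: "(\<forall>x. Q *v x = x \<longrightarrow> x = 0) \<longrightarrow> bounded (range a)"
  proof
    assume fx: "\<forall>x. Q *v x = x \<longrightarrow> x = 0"
    have "P (Lambda_vec \<gamma> r e (u 0) (U 0)) \<in> {x. Q *v x = x}"
      unfolding Pd by (rule orth_proj_props(1)[OF fix_subspace])
    then have "P (Lambda_vec \<gamma> r e (u 0) (U 0)) = 0" using fx by auto
    then have k0: "\<kappa> = 0" by (simp add: \<kappa>_def)
    define M where "M = max (norm (transv e (a 0))) (norm (transv e (a 1))) + G"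
    have "norm (a l) \<le> M" for l
    proof -
      have al: "a l = transv e (a l) + (a l \<bullet> e) *\<^sub>R e" by (simp add: transv_def)
      have "norm (a l) \<le> norm (transv e (a l)) + norm ((a l \<bullet> e) *\<^sub>R e)"
        by (subst al) (rule norm_triangle_ineq)
      also have "norm ((a l \<bullet> e) *\<^sub>R e) = \<bar>hhat l\<bar>" using hh k0 e_unit by simp
      also have "norm (transv e (a l)) \<le> max (norm (transv e (a 0))) (norm (transv e (a 1)))"
        using tv[of l] by auto
      finally show ?thesis using G[of l] by (simp add: M_def)
    qed
    then show "bounded (range a)" unfolding bounded_iff by auto
  qed
  have part5: "(\<exists>x. Q *v x = x \<and> \<xi> \<bullet> x \<noteq> 0) \<longrightarrow>
         (\<exists>H :: (real^'n) set. subspace H \<and> H \<noteq> UNIV \<and>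
            (\<forall>a' u' U'. nsb_traj \<gamma> r e nuf a' u' U' \<and> a' 0 \<bullet> e = 0
               \<and> (\<forall>j. transv e (a' j) = transv e (a j))
               \<and> Lambda_vec \<gamma> r e (u' 0) (U' 0) \<notin> H
               \<longrightarrow> \<not> bounded (range a')))"
  proof
    assume "\<exists>x. Q *v x = x \<and> \<xi> \<bullet> x \<noteq> 0"
    then obtain x0 where x0: "Q *v x0 = x0" "\<xi> \<bullet> x0 \<noteq> 0" by blast
    note PL = orth_proj_linear[OF fix_subspace[of Q], folded Pd]
    define H where "H = {v. \<xi> \<bullet> P v = 0}"
    have sH: "subspace H"
      unfolding subspace_def H_def
      using PL(2)[of 0 0] by (auto simp: PL inner_add_right)
    have "x0 \<notin> H" using x0 PL(3)[of x0] by (simp add: H_def)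
    then have nU: "H \<noteq> UNIV" by blast
    have unb: "\<not> bounded (range a')"
      if tr: "nsb_traj \<gamma> r e nuf a' u' U'" and z: "a' 0 \<bullet> e = 0"
        and sm: "\<forall>j. transv e (a' j) = transv e (a j)"
        and nH: "Lambda_vec \<gamma> r e (u' 0) (U' 0) \<notin> H" for a' u' U'
    proof
      assume bd: "bounded (range a')"
      define k where "k = \<xi> \<bullet> P (Lambda_vec \<gamma> r e (u' 0) (U' 0))"
      have k: "k \<noteq> 0" using nH by (simp add: H_def k_def)
      obtain h' where hb': "bounded (range h')" and hh': "\<forall>l. a' l \<bullet> e = h' l + real (l div 2) * k"
        using gen[OF tr z sm] unfolding k_def by blast
      obtain G' where G': "\<And>l. \<bar>h' l\<bar> \<le> G'" using hb' unfolding bounded_iff by auto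
      obtain M where M: "\<And>l. norm (a' l) \<le> M" using bd unfolding bounded_iff by auto
      have bnd: "\<bar>real (l div 2) * k\<bar> \<le> M + G'" for l
      proof -
        have "\<bar>a' l \<bullet> e\<bar> \<le> norm (a' l) * norm e" by (rule Cauchy_Schwarz_ineq2)
        then have "\<bar>a' l \<bullet> e\<bar> \<le> M" using M[of l] e_unit by simp
        then show ?thesis using hh'[rule_format, of l] G'[of l] by linarith
      qed
      obtain n where n: "(M + G') / \<bar>k\<bar> < real n" using reals_Archimedean2 by blast
      have "\<bar>real ((2 * n) div 2) * k\<bar> \<le> M + G'" by (rule bnd)
      then have "\<bar>real n * k\<bar> \<le> M + G'" by simp
      then have "real n * \<bar>k\<bar> \<le> M + G'" by (simp add: abs_mult)
      moreover have "M + G' < real n * \<bar>k\<bar>" using n k by (simp add: divide_less_eq)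
      ultimately show False by simp
    qed
    show "\<exists>H :: (real^'n) set. subspace H \<and> H \<noteq> UNIV \<and>
            (\<forall>a' u' U'. nsb_traj \<gamma> r e nuf a' u' U' \<and> a' 0 \<bullet> e = 0
               \<and> (\<forall>j. transv e (a' j) = transv e (a j))
               \<and> Lambda_vec \<gamma> r e (u' 0) (U' 0) \<notin> H
               \<longrightarrow> \<not> bounded (range a'))"
      using sH nU unb by blast
  qed
  show ?thesis using part1 part2 part3 part4 part5 unfolding \<kappa>_def by blast
qed

end
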